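(* For every pair of positive integers $\ell,k$ with $1\leq \ell<k$, $$\sum_{r=1}^k r!\,{k\brace r}=\sum_{p=1}^{\ell}\sum_{q=1}^{k-\ell}{\ell\brace p}{k-\ell\brace q}\,p!\,q!\,D(p,q).$$
   Context: ${k\brace r}$ denotes the Stirling number of the second kind (number of partitions of a $k$-element set into $r$ nonempty blocks). $D(m,n)$ is the Delannoy number, defined for nonnegative integers $m,n$ by $D(m,n)=1$ if $mn=0$, and $D(m,n)=D(m-1,n)+D(m-1,n-1)+D(m,n-1)$ if $mn\neq0$. *)

theory Defs
  imports "HOL-Combinatorics.Stirling"
begin

fun Delannoy :: "nat \<Rightarrow> nat \<Rightarrow> nat" where
  "Delannoy 0 n = 1"
| "Delannoy (Suc m) 0 = 1"
| "Delannoy (Suc m) (Suc n) = Delannoy m (Suc n) + Delannoy m n + Delannoy (Suc m) n"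

end

theory Submission
  imports Defs
begin

fun Mcov :: "int \<Rightarrow> int \<Rightarrow> nat \<Rightarrow> int" where
  "Mcov p q 0 = (if p = 0 \<and> q = 0 then 1 else 0)"
| "Mcov p q (Suc r) = Mcov (p-1) q r + Mcov p (q-1) r + Mcov (p-1) (q-1) r"

definition Mm :: "int \<Rightarrow> int \<Rightarrow> nat \<Rightarrow> int" where
  "Mm p q r = (case r of 0 \<Rightarrow> 0 | Suc r' \<Rightarrow> Mcov p q r')"

lemma Mneg: "p < 0 \<or> q < 0 \<Longrightarrow> Mcov p q r = 0"
  by (induction r arbitrary: p q) auto

lemma Mq0: "Mcov p 0 r = (if p = int r then 1 else 0)"
  by (induction r arbitrary: p) (auto simp: Mneg)

lemma Mm_rec: "int r * (Mm (p-1) q r + Mm p (q-1) r + Mm (p-1) (q-1) r) = int r * Mcov p q r"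
  by (cases r) (auto simp: Mm_def)

lemma identA: "q * Mcov p q r + (q+1) * Mcov p (q+1) r = int r * Mcov p q r + int r * Mm p q r"
proof (induction r arbitrary: p q)
  case 0
  then show ?case by (simp add: Mm_def)
next
  case (Suc r)
  note h1 = Suc.IH[where p="p-1" and q=q] and h2 = Suc.IH[where p=p and q="q-1"] and h3 = Suc.IH[where p="p-1" and q="q-1"]
  note h4 = Mm_rec[of r p q]
  have e: "Mm p q (Suc r) = Mcov p q r" by (simp add: Mm_def)
  show ?case using h1 h2 h3 h4 e by (simp add: algebra_simps)
qed

lemma sumM: "p + q \<le> N \<Longrightarrow> (\<Sum>r\<le>N. Mcov (int p) (int q) r) = int (Delannoy p q)"
proof (induction N arbitrary: p q)
  case 0
  then show ?case by simp
next
  case (Suc N)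
  have neg: "(\<Sum>r\<le>N. Mcov a b r) = 0" if "a < 0 \<or> b < 0" for a b
    using that by (simp add: Mneg)
  have split: "(\<Sum>r\<le>Suc N. Mcov (int p) (int q) r) = Mcov (int p) (int q) 0 +
     (\<Sum>r\<le>N. Mcov (int p - 1) (int q) r) + (\<Sum>r\<le>N. Mcov (int p) (int q - 1) r)
     + (\<Sum>r\<le>N. Mcov (int p - 1) (int q - 1) r)"
    by (simp add: sum.atMost_Suc_shift sum.distrib del: sum.atMost_Suc)
  show ?case
  proof (cases p)
    case 0
    note p0 = 0
    show ?thesis
    proof (cases q)
      case 0 then show ?thesis using split p0 neg by simp
    next
      case (Suc n)
      have "(\<Sum>r\<le>N. Mcov (int 0) (int n) r) = int (Delannoy 0 n)"
        using Suc.IH[of 0 n] Suc.prems Suc p0 by simp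
      then show ?thesis using split p0 neg Suc by simp
    qed
  next
    case (Suc m)
    note pS = Suc
    show ?thesis
    proof (cases q)
      case 0
      have "(\<Sum>r\<le>N. Mcov (int m) (int 0) r) = int (Delannoy m 0)"
        using Suc.IH[of m 0] Suc.prems pS 0 by simp
      then show ?thesis using split pS neg 0 by (cases m) simp_all
    next
      case (Suc n)
      have a: "(\<Sum>r\<le>N. Mcov (int m) (int (Suc n)) r) = int (Delannoy m (Suc n))"
        using Suc.IH[of m "Suc n"] Suc.prems pS Suc by simp
      have b: "(\<Sum>r\<le>N. Mcov (int (Suc m)) (int n) r) = int (Delannoy (Suc m) n)"
        using Suc.IH[of "Suc m" n] Suc.prems pS Suc by simp
      have c: "(\<Sum>r\<le>N. Mcov (int m) (int n) r) = int (Delannoy m n)"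
        using Suc.IH[of m n] Suc.prems pS Suc by simp
      show ?thesis using split pS Suc a b c by simp
    qed
  qed
qed

definition fs :: "nat \<Rightarrow> nat \<Rightarrow> int" where
  "fs n r = int (fact r * Stirling n r)"

definition fm :: "nat \<Rightarrow> nat \<Rightarrow> int" where
  "fm n r = (case r of 0 \<Rightarrow> 0 | Suc r' \<Rightarrow> fs n r')"

lemma fs_rec: "fs (Suc n) r = int r * (fs n r + fm n r)"
proof (cases r)
  case 0 then show ?thesis by (simp add: fs_def fm_def)
next
  case (Suc k)
  have "fact (Suc k) * Stirling (Suc n) (Suc k) =
     Suc k * (fact (Suc k) * Stirling n (Suc k) + fact k * Stirling n k)"
    by (simp add: algebra_simps)
  then show ?thesis using Suc unfolding fs_def fm_def
    by (metis (no_types, lifting) nat.simps(5) of_nat_add of_nat_mult)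
qed

lemma fs_big: "n < r \<Longrightarrow> fs n r = 0" by (simp add: fs_def)
lemma fs_0: "0 < n \<Longrightarrow> fs n 0 = 0" by (cases n) (simp_all add: fs_def)
lemma fs_00: "fs 0 r = (if r = 0 then 1 else 0)" by (cases r) (simp_all add: fs_def)

lemma fm_big: "n < r \<Longrightarrow> fm n (Suc r) = 0" by (simp add: fm_def fs_big)

lemma mainL: "fs (a + b) r = (\<Sum>p\<le>a. \<Sum>q\<le>b. fs a p * fs b q * Mcov (int p) (int q) r)"
proof (induction b arbitrary: r)
  case 0
  have "(\<Sum>p\<le>a. \<Sum>q\<le>0. fs a p * fs 0 q * Mcov (int p) (int q) r)
      = (\<Sum>p\<le>a. fs a p * (if p = r then 1 else 0))"
    by (simp add: fs_00 Mq0)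
  also have "\<dots> = (\<Sum>p\<le>a. if p = r then fs a p else 0)"
    by (rule sum.cong) auto
  also have "\<dots> = fs a r" by (simp add: fs_big)
  finally show ?case by simp
next
  case (Suc b)
  have fmIH: "fm (a + b) r = (\<Sum>p\<le>a. \<Sum>q\<le>b. fs a p * fs b q * Mm (int p) (int q) r)"
    using Suc.IH by (cases r) (simp_all add: fm_def Mm_def)
  have "fs (a + Suc b) r = int r * (fs (a+b) r + fm (a+b) r)" by (simp add: fs_rec)
  also have "\<dots> = (\<Sum>p\<le>a. \<Sum>q\<le>b. fs a p * fs b q *
       (int r * Mcov (int p) (int q) r + int r * Mm (int p) (int q) r))"
    by (simp add: Suc.IH fmIH sum_distrib_left sum.distrib algebra_simps)
  also have "\<dots> = (\<Sum>p\<le>a. \<Sum>q\<le>b. fs a p * fs b q *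
       (int q * Mcov (int p) (int q) r + (int q + 1) * Mcov (int p) (int q + 1) r))"
    by (simp add: identA)
  also have "\<dots> = (\<Sum>p\<le>a. \<Sum>q\<le>Suc b. fs a p * fs (Suc b) q * Mcov (int p) (int q) r)"
  proof (rule sum.cong[OF refl])
    fix p
    have A: "(\<Sum>q\<le>Suc b. int q * fs b q * Mcov (int p) (int q) r)
        = (\<Sum>q\<le>b. int q * fs b q * Mcov (int p) (int q) r)"
      by (simp add: fs_big)
    have B: "(\<Sum>q\<le>Suc b. int q * fm b q * Mcov (int p) (int q) r)
        = (\<Sum>q\<le>b. (int q + 1) * fs b q * Mcov (int p) (int q + 1) r)"
      by (simp add: sum.atMost_Suc_shift fm_def del: sum.atMost_Suc) (simp add: algebra_simps)
    have "(\<Sum>q\<le>Suc b. fs a p * fs (Suc b) q * Mcov (int p) (int q) r)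
       = fs a p * ((\<Sum>q\<le>Suc b. int q * fs b q * Mcov (int p) (int q) r)
          + (\<Sum>q\<le>Suc b. int q * fm b q * Mcov (int p) (int q) r))"
      by (simp add: fs_rec sum_distrib_left sum.distrib algebra_simps del: sum.atMost_Suc)
    also have "\<dots> = (\<Sum>q\<le>b. fs a p * fs b q *
       (int q * Mcov (int p) (int q) r + (int q + 1) * Mcov (int p) (int q + 1) r))"
      unfolding A B by (simp add: sum_distrib_left sum.distrib algebra_simps)
    finally show "(\<Sum>q\<le>b. fs a p * fs b q *
       (int q * Mcov (int p) (int q) r + (int q + 1) * Mcov (int p) (int q + 1) r))
       = (\<Sum>q\<le>Suc b. fs a p * fs (Suc b) q * Mcov (int p) (int q) r)" by simp
  qed
  finally show ?case .
qed

theorem theorem2: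
  fixes l k :: nat
  assumes "1 \<le> l" and "l < k"
  shows "(\<Sum>r=1..k. fact r * Stirling k r) =
    (\<Sum>p=1..l. \<Sum>q=1..k-l. Stirling l p * Stirling (k-l) q * fact p * fact q * Delannoy p q)"
proof -
  define b where "b = k - l"
  have kb: "k = l + b" and b1: "0 < b" and l1: "0 < l" using assms by (auto simp: b_def)
  have atl: "{..n} = insert 0 {1..n}" for n :: nat by auto
  have "int (\<Sum>r=1..k. fact r * Stirling k r) = (\<Sum>r=1..k. fs k r)"
    by (simp add: fs_def)
  also have "\<dots> = (\<Sum>r\<le>k. fs k r)"
    using l1 kb by (simp add: atl fs_0)
  also have "\<dots> = (\<Sum>r\<le>k. \<Sum>p\<le>l. \<Sum>q\<le>b. fs l p * fs b q * Mcov (int p) (int q) r)"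
    unfolding kb by (simp add: mainL)
  also have "\<dots> = (\<Sum>p\<le>l. \<Sum>q\<le>b. \<Sum>r\<le>k. fs l p * fs b q * Mcov (int p) (int q) r)"
    by (subst sum.swap) (simp add: sum.swap[of _ "{..k}"])
  also have "\<dots> = (\<Sum>p\<le>l. \<Sum>q\<le>b. fs l p * fs b q * int (Delannoy p q))"
  proof (intro sum.cong refl)
    fix p q assume "p \<in> {..l}" "q \<in> {..b}"
    then have "p + q \<le> k" using kb by simp
    then show "(\<Sum>r\<le>k. fs l p * fs b q * Mcov (int p) (int q) r) = fs l p * fs b q * int (Delannoy p q)"
      by (simp add: sum_distrib_left[symmetric] sumM)
  qed
  also have "\<dots> = (\<Sum>p=1..l. \<Sum>q=1..b. fs l p * fs b q * int (Delannoy p q))"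
    using l1 b1 by (simp add: atl fs_0)
  also have "\<dots> = int (\<Sum>p=1..l. \<Sum>q=1..b. Stirling l p * Stirling b q * fact p * fact q * Delannoy p q)"
    by (simp add: fs_def algebra_simps)
  finally show ?thesis unfolding b_def by (simp only: of_nat_eq_iff)
qed

end
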